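(* Let $\mathcal{A},\mathcal{B}$ be Hilbert spaces with $\dim\mathcal{A}=\dim\mathcal{B}=d$, let $|\phi\rangle\in\mathcal{A}\otimes\mathcal{B}$ be an entangled pure state, and let $\rho=\frac{1}{d^2-1}(I_{\mathcal{A}\otimes\mathcal{B}}-|\phi\rangle\langle\phi|)$. Then $\{|\phi\rangle\langle\phi|,\rho\}$ is indistinguishable by PPT operations in the many copy scenario.
   Context: A bipartite positive semidefinite operator $E$ is PPT if its partial transpose $E^{T_B}$ (defined by $(|i\rangle\langle k|\otimes|j\rangle\langle l|)^{T_B}=|i\rangle\langle k|\otimes|l\rangle\langle j|$) is positive semidefinite. A set of orthogonal states $\{\rho_1,\dots,\rho_n\}$ on $\mathcal{A}\otimes\mathcal{B}$ is unambiguously distinguishable by PPT operations if there exist PPT operators $M_1,\dots,M_n$ with $\sum_k M_k=I$ and $\operatorname{tr}(M_i\rho_j)=p_i\delta_{ij}$, $p_i>0$ for all $i,j$; otherwise it is indistinguishable by PPT operations. It is indistinguishable by PPT operations in the many copy scenario if for every positive integer $m$, $\{\rho_1^{\otimes m},\dots,\rho_n^{\otimes m}\}$, regarded as bipartite states with respect to $\mathcal{A}^{\otimes m}:\mathcal{B}^{\otimes m}$, is indistinguishable by PPT operations. *)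

theory Defs
  imports Complex_Main
begin

text \<open>A Hilbert space with orthonormal basis
indexed by a finite set IA (resp. IB); an operator on the tensor product is given by its
matrix entries with respect to the product basis, indexed by pairs (a,b) with a in IA, b in IB.\<close>

type_synonym ('a, 'b) bop = "('a \<times> 'b) \<Rightarrow> ('a \<times> 'b) \<Rightarrow> complex"

definition bid :: "('a, 'b) bop" where
  "bid x y = (if x = y then 1 else 0)"

definition psd_on :: "'c set \<Rightarrow> ('c \<Rightarrow> 'c \<Rightarrow> complex) \<Rightarrow> bool" where
  "psd_on I M \<longleftrightarrow>
     (\<forall>x\<in>I. \<forall>y\<in>I. M x y = cnj (M y x)) \<and>
     (\<forall>v :: 'c \<Rightarrow> complex. let q = (\<Sum>x\<in>I. \<Sum>y\<in>I. cnj (v x) * M x y * v y)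
                             in Im q = 0 \<and> Re q \<ge> 0)"

text \<open>Partial transpose on B:
  (|i><k| \<otimes> |j><l|)^{T_B} = |i><k| \<otimes> |l><j|.\<close>
definition ptB :: "('a, 'b) bop \<Rightarrow> ('a, 'b) bop" where
  "ptB E = (\<lambda>(i, j) (k, l). E (i, l) (k, j))"

definition PPT_on :: "'a set \<Rightarrow> 'b set \<Rightarrow> ('a, 'b) bop \<Rightarrow> bool" where
  "PPT_on IA IB E \<longleftrightarrow> psd_on (IA \<times> IB) E \<and> psd_on (IA \<times> IB) (ptB E)"

definition tr_prod :: "'c set \<Rightarrow> ('c \<Rightarrow> 'c \<Rightarrow> complex) \<Rightarrow> ('c \<Rightarrow> 'c \<Rightarrow> complex) \<Rightarrow> complex" where
  "tr_prod I M R = (\<Sum>x\<in>I. \<Sum>y\<in>I. M x y * R y x)"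

definition PPT_unamb_dist :: "'a set \<Rightarrow> 'b set \<Rightarrow> ('a, 'b) bop list \<Rightarrow> bool" where
  "PPT_unamb_dist IA IB rhos \<longleftrightarrow>
     (\<exists>Ms :: ('a, 'b) bop list. \<exists>p :: nat \<Rightarrow> real.
        length Ms = length rhos \<and>
        (\<forall>i<length Ms. PPT_on IA IB (Ms ! i)) \<and>
        (\<forall>x\<in>IA \<times> IB. \<forall>y\<in>IA \<times> IB. (\<Sum>k<length Ms. (Ms ! k) x y) = bid x y) \<and>
        (\<forall>i<length rhos. p i > 0) \<and>
        (\<forall>i<length rhos. \<forall>j<length rhos.
            tr_prod (IA \<times> IB) (Ms ! i) (rhos ! j) = (if i = j then complex_of_real (p i) else 0)))"

text \<open>Basis of the m-fold tensor power of a space with basis I: words of length m over I.\<close>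
definition words :: "nat \<Rightarrow> 'a set \<Rightarrow> 'a list set" where
  "words m I = {xs. length xs = m \<and> set xs \<subseteq> I}"

text \<open>m-fold tensor power of a bipartite operator, regarded as an operator on
  A^{\<otimes>m} \<otimes> B^{\<otimes>m} (bipartition A^{\<otimes>m} : B^{\<otimes>m}).\<close>
definition btpow :: "nat \<Rightarrow> ('a, 'b) bop \<Rightarrow> ('a list, 'b list) bop" where
  "btpow m R = (\<lambda>(a, b) (a', b'). \<Prod>t<m. R (a ! t, b ! t) (a' ! t, b' ! t))"

definition PPT_indist_many_copy :: "'a set \<Rightarrow> 'b set \<Rightarrow> ('a, 'b) bop list \<Rightarrow> bool" where
  "PPT_indist_many_copy IA IB rhos \<longleftrightarrow>
     (\<forall>m::nat. m > 0 \<longrightarrow> \<not> PPT_unamb_dist (words m IA) (words m IB) (map (btpow m) rhos))"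

definition proj :: "(nat \<times> nat \<Rightarrow> complex) \<Rightarrow> (nat, nat) bop" where
  "proj \<phi> = (\<lambda>x y. \<phi> x * cnj (\<phi> y))"

definition unit_vec :: "nat \<Rightarrow> (nat \<times> nat \<Rightarrow> complex) \<Rightarrow> bool" where
  "unit_vec d \<phi> \<longleftrightarrow> (\<Sum>x\<in>{..<d} \<times> {..<d}. (cmod (\<phi> x))\<^sup>2) = 1"

definition entangled :: "nat \<Rightarrow> (nat \<times> nat \<Rightarrow> complex) \<Rightarrow> bool" where
  "entangled d \<phi> \<longleftrightarrow> \<not> (\<exists>u v :: nat \<Rightarrow> complex. \<forall>i<d. \<forall>j<d. \<phi> (i, j) = u i * v j)"

end

theory Submission
  imports Defs
begin

definition qf :: "'c set \<Rightarrow> ('c \<Rightarrow> 'c \<Rightarrow> complex) \<Rightarrow> ('c \<Rightarrow> complex) \<Rightarrow> complex" where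
  "qf I M v = (\<Sum>x\<in>I. \<Sum>y\<in>I. cnj (v x) * M x y * v y)"

definition sesq :: "'c set \<Rightarrow> ('c \<Rightarrow> 'c \<Rightarrow> complex) \<Rightarrow> ('c \<Rightarrow> complex) \<Rightarrow> ('c \<Rightarrow> complex) \<Rightarrow> complex" where
  "sesq I M v w = (\<Sum>x\<in>I. \<Sum>y\<in>I. cnj (v x) * M x y * w y)"

lemma cnj_mult_self: "cnj z * z = complex_of_real ((cmod z)\<^sup>2)"
  using complex_norm_square[of z] by (simp only: mult.commute)

lemma sum_pair: "(\<Sum>x\<in>A\<times>B. f x) = (\<Sum>i\<in>A. \<Sum>j\<in>B. f (i,j))"
  by (simp add: sum.cartesian_product)

lemma psd_qf: "psd_on I M \<Longrightarrow> Im (qf I M v) = 0 \<and> 0 \<le> Re (qf I M v)"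
  unfolding psd_on_def qf_def Let_def by blast

lemma psd_herm: "psd_on I M \<Longrightarrow> x \<in> I \<Longrightarrow> y \<in> I \<Longrightarrow> M x y = cnj (M y x)"
  unfolding psd_on_def by blast

lemma qf_expand:
  "qf I M (\<lambda>x. v x + c * u x) = qf I M v + cnj c * sesq I M u v + c * sesq I M v u + cnj c * c * qf I M u"
  unfolding qf_def sesq_def
  by (simp add: algebra_simps sum.distrib sum_distrib_left)

lemma psd_kernel:
  assumes fin: "finite I" and psd: "psd_on I M" and q0: "qf I M v = 0" and x: "x \<in> I"
  shows "(\<Sum>y\<in>I. M x y * v y) = 0"
proof -
  define u where "u x = (\<Sum>y\<in>I. M x y * v y)" for x
  define S where "S = (\<Sum>x\<in>I. (cmod (u x))\<^sup>2)"
  have s1: "sesq I M u v = of_real S"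
  proof -
    have "sesq I M u v = (\<Sum>x\<in>I. cnj (u x) * u x)"
      unfolding sesq_def
    proof (rule sum.cong[OF refl])
      fix x assume "x \<in> I"
      have "(\<Sum>y\<in>I. cnj (u x) * M x y * v y) = cnj (u x) * (\<Sum>y\<in>I. M x y * v y)"
        by (simp add: sum_distrib_left mult.assoc)
      then show "(\<Sum>y\<in>I. cnj (u x) * M x y * v y) = cnj (u x) * u x" by (simp add: u_def)
    qed
    also have "\<dots> = of_real S"
      unfolding S_def of_real_sum by (simp only: cnj_mult_self)
    finally show ?thesis .
  qed
  have "sesq I M v u = (\<Sum>y\<in>I. (\<Sum>x\<in>I. cnj (v x) * M x y) * u y)"
    unfolding sesq_def by (subst sum.swap) (simp add: sum_distrib_right)
  also have "\<dots> = (\<Sum>y\<in>I. cnj (u y) * u y)"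
  proof (rule sum.cong[OF refl])
    fix y assume y: "y \<in> I"
    have "(\<Sum>x\<in>I. cnj (v x) * M x y) = cnj (u y)"
      unfolding u_def cnj_sum
      by (rule sum.cong[OF refl]) (simp add: psd_herm[OF psd _ y] mult.commute)
    then show "(\<Sum>x\<in>I. cnj (v x) * M x y) * u y = cnj (u y) * u y" by simp
  qed
  also have "\<dots> = of_real S"
    unfolding S_def of_real_sum by (simp only: cnj_mult_self)
  finally have s2: "sesq I M v u = of_real S" .
  define K where "K = Re (qf I M u)"
  have K0: "K \<ge> 0" using psd_qf[OF psd] K_def by blast
  have S0: "S \<ge> 0" unfolding S_def by (simp add: sum_nonneg)
  have ineq: "0 \<le> - 2 * t * S + t * t * K" for t :: real
  proof -
    have "0 \<le> Re (qf I M (\<lambda>x. v x + of_real (-t) * u x))" using psd_qf[OF psd] by blast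
    also have "\<dots> = - 2 * t * S + t * t * K"
      unfolding qf_expand s1 s2 q0 K_def by simp
    finally show ?thesis .
  qed
  have "S = 0"
  proof (rule ccontr)
    assume "S \<noteq> 0" then have Sp: "S > 0" using S0 by simp
    define t where "t = S / (K + 1)"
    have tp: "t > 0" using Sp K0 unfolding t_def by simp
    have "t * K \<le> S" unfolding t_def using K0 Sp by (simp add: field_simps)
    then have "t * t * K \<le> t * S" using tp
      by (metis mult.assoc mult_left_mono less_imp_le mult.commute)
    then have "- 2 * t * S + t * t * K < 0" using tp Sp
    proof -
      have "t * S > 0" using tp Sp by simp
      then show ?thesis using \<open>t * t * K \<le> t * S\<close> by linarith
    qed
    then show False using ineq[of t] by simp
  qed
  then have "\<forall>x\<in>I. (cmod (u x))\<^sup>2 = 0" unfolding S_def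
    using sum_nonneg_eq_0_iff[OF fin, of "\<lambda>x. (cmod (u x))\<^sup>2"] by simp
  then show ?thesis using x unfolding u_def by simp
qed

definition dl :: "nat \<Rightarrow> nat \<Rightarrow> complex" where
  "dl i = (\<lambda>x. if x = i then 1 else 0)"
definition bil :: "nat \<Rightarrow> (nat \<Rightarrow> nat \<Rightarrow> complex) \<Rightarrow> (nat \<Rightarrow> complex) \<Rightarrow> (nat \<Rightarrow> complex) \<Rightarrow> complex" where
  "bil d F a b = (\<Sum>i<d. \<Sum>j<d. F i j * a i * b j)"
lemma sum_dl_right: "j < d \<Longrightarrow> (\<Sum>y<d. f y * dl j y) = f j"
proof -
  assume j: "j < d"
  have "(\<Sum>y<d. f y * dl j y) = (\<Sum>y<d. if y = j then f y else 0)"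
    by (rule sum.cong) (auto simp: dl_def)
  then show ?thesis using j by simp
qed
lemma bil_delta: "i < d \<Longrightarrow> j < d \<Longrightarrow> bil d F (dl i) (dl j) = F i j"
proof -
  assume i: "i < d" and j: "j < d"
  have "bil d F (dl i) (dl j) = (\<Sum>x<d. (F x j * dl i x))"
    unfolding bil_def
  proof (rule sum.cong[OF refl])
    fix x show "(\<Sum>y<d. F x y * dl i x * dl j y) = F x j * dl i x"
      using sum_dl_right[OF j, of "\<lambda>y. F x y * dl i x"] .
  qed
  also have "\<dots> = F i j" using sum_dl_right[OF i, of "\<lambda>x. F x j"] .
  finally show ?thesis .
qed
lemma bil_lin_left: "bil d F (\<lambda>x. a x + c * a' x) b = bil d F a b + c * bil d F a' b"
  unfolding bil_def by (simp add: algebra_simps sum.distrib sum_distrib_left)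

lemma bil_lin_right: "bil d F a (\<lambda>x. b x + c * b' x) = bil d F a b + c * bil d F a b'"
  unfolding bil_def by (simp add: algebra_simps sum.distrib sum_distrib_left)
lemma bil2:
  assumes "i < d" "i' < d" "j < d" "j' < d"
  shows "bil d F (\<lambda>x. dl i x + c * dl i' x) (\<lambda>y. dl j y + e * dl j' y)
       = F i j + e * F i j' + c * F i' j + c * e * F i' j'"
  by (simp add: bil_lin_left bil_lin_right bil_delta assms algebra_simps)
lemma span_lemma:
  assumes H: "\<And>a b. bil d P a b = 0 \<Longrightarrow> bil d F a b = 0"
    and p0: "p0 < d" and r0: "r0 < d" and P0: "P p0 r0 \<noteq> 0"
    and i: "i < d" and j: "j < d"
  shows "F i j = (F p0 r0 / P p0 r0) * P i j"
proof -
  define c where "c = F p0 r0 / P p0 r0"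
  have Fc0: "F p0 r0 = c * P p0 r0" using P0 unfolding c_def by simp
  have col: "F i' r0 = c * P i' r0" if i': "i' < d" for i'
  proof -
    let ?k = "- (P i' r0 / P p0 r0)"
    have "bil d P (\<lambda>x. dl i' x + ?k * dl p0 x) (\<lambda>y. dl r0 y + 0 * dl r0 y) = 0"
      using bil2[OF i' p0 r0 r0, of P ?k 0] P0 by simp
    then have "bil d F (\<lambda>x. dl i' x + ?k * dl p0 x) (\<lambda>y. dl r0 y + 0 * dl r0 y) = 0" by (rule H)
    then have "F i' r0 + ?k * F p0 r0 = 0" using bil2[OF i' p0 r0 r0, of F ?k 0] by simp
    then show ?thesis using Fc0 P0 by (simp add: field_simps)
  qed
  have row: "F p0 j' = c * P p0 j'" if j': "j' < d" for j'
  proof -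
    let ?k = "- (P p0 j' / P p0 r0)"
    have "bil d P (\<lambda>x. dl p0 x + 0 * dl p0 x) (\<lambda>y. dl j' y + ?k * dl r0 y) = 0"
      using bil2[OF p0 p0 j' r0, of P 0 ?k] P0 by simp
    then have "bil d F (\<lambda>x. dl p0 x + 0 * dl p0 x) (\<lambda>y. dl j' y + ?k * dl r0 y) = 0" by (rule H)
    then have "F p0 j' + ?k * F p0 r0 = 0" using bil2[OF p0 p0 j' r0, of F 0 ?k] by simp
    then show ?thesis using Fc0 P0 by (simp add: field_simps)
  qed
  have "F i j = c * P i j"
  proof (cases "P i r0 \<noteq> 0")
    case True
    let ?k = "- (P i j / P i r0)"
    have "bil d P (\<lambda>x. dl i x + 0 * dl i x) (\<lambda>y. dl j y + ?k * dl r0 y) = 0"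
      using bil2[OF i i j r0, of P 0 ?k] True by simp
    then have "bil d F (\<lambda>x. dl i x + 0 * dl i x) (\<lambda>y. dl j y + ?k * dl r0 y) = 0" by (rule H)
    then have "F i j + ?k * F i r0 = 0" using bil2[OF i i j r0, of F 0 ?k] by simp
    then show ?thesis using col[OF i] True by (simp add: field_simps)
  next
    case False
    then have Pir: "P i r0 = 0" by simp
    show ?thesis
    proof (cases "P p0 j \<noteq> 0")
      case True
      let ?k = "- (P i j / P p0 j)"
      have "bil d P (\<lambda>x. dl i x + ?k * dl p0 x) (\<lambda>y. dl j y + 0 * dl j y) = 0"
        using bil2[OF i p0 j j, of P ?k 0] True by simp
      then have "bil d F (\<lambda>x. dl i x + ?k * dl p0 x) (\<lambda>y. dl j y + 0 * dl j y) = 0" by (rule H)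
      then have "F i j + ?k * F p0 j = 0" using bil2[OF i p0 j j, of F ?k 0] by simp
      then show ?thesis using row[OF j] True by (simp add: field_simps)
    next
      case False
      then have Pp0j: "P p0 j = 0" by simp
      show ?thesis
      proof (cases "P i j = 0")
        case True
        have "bil d P (\<lambda>x. dl i x + 0 * dl i x) (\<lambda>y. dl j y + 0 * dl j y) = 0"
          using bil2[OF i i j j, of P 0 0] True by simp
        then have "bil d F (\<lambda>x. dl i x + 0 * dl i x) (\<lambda>y. dl j y + 0 * dl j y) = 0" by (rule H)
        then have "F i j = 0" using bil2[OF i i j j, of F 0 0] by simp
        then show ?thesis using True by simp
      next
        case False
        let ?s = "- (P p0 r0 / P i j)"
        have s0: "?s \<noteq> 0" using False P0 by simp
        have "bil d P (\<lambda>x. dl p0 x + ?s * dl i x) (\<lambda>y. dl r0 y + 1 * dl j y) = 0"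
          using bil2[OF p0 i r0 j, of P ?s 1] False Pir Pp0j by simp
        then have "bil d F (\<lambda>x. dl p0 x + ?s * dl i x) (\<lambda>y. dl r0 y + 1 * dl j y) = 0" by (rule H)
        then have "F p0 r0 + F p0 j + ?s * F i r0 + ?s * F i j = 0"
          using bil2[OF p0 i r0 j, of F ?s 1] by simp
        then have "c * P p0 r0 + ?s * F i j = 0"
          using Fc0 row[OF j] col[OF i] Pir Pp0j by simp
        then show ?thesis using False P0 by (simp add: field_simps)
      qed
    qed
  qed
  then show ?thesis unfolding c_def .
qed

lemma sum_dl_left: "j < d \<Longrightarrow> (\<Sum>y<d. dl j y * f y) = f j"
  using sum_dl_right[of j d f] by (simp add: mult.commute)

lemma cnj_dl[simp]: "cnj (dl p i) = dl p i"
  by (simp add: dl_def)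

lemma witness_c:
  assumes p: "p < d" and q: "q < d"
  shows "(\<Sum>i<d. \<Sum>k<d. (dl p k * A i + dl q k * B i) * cnj (dl p i * A k + dl q i * B k))
       = A p * cnj (A p) + A q * cnj (B p) + B p * cnj (A q) + B q * cnj (B q)"
proof -
  have "\<And>i. (\<Sum>k<d. (dl p k * A i + dl q k * B i) * cnj (dl p i * A k + dl q i * B k))
      = A i * cnj (dl p i * A p + dl q i * B p) + B i * cnj (dl p i * A q + dl q i * B q)"
  proof -
    fix i
    have "(\<Sum>k<d. (dl p k * A i + dl q k * B i) * cnj (dl p i * A k + dl q i * B k))
      = (\<Sum>k<d. dl p k * (A i * cnj (dl p i * A k + dl q i * B k)))
      + (\<Sum>k<d. dl q k * (B i * cnj (dl p i * A k + dl q i * B k)))"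
      by (simp add: algebra_simps sum.distrib)
    also have "\<dots> = A i * cnj (dl p i * A p + dl q i * B p) + B i * cnj (dl p i * A q + dl q i * B q)"
      by (simp only: sum_dl_left[OF p] sum_dl_left[OF q])
    finally show "?thesis i" .
  qed
  then have "(\<Sum>i<d. \<Sum>k<d. (dl p k * A i + dl q k * B i) * cnj (dl p i * A k + dl q i * B k))
     = (\<Sum>i<d. dl p i * (A i * cnj (A p)) + dl q i * (A i * cnj (B p)) + dl p i * (B i * cnj (A q)) + dl q i * (B i * cnj (B q)))"
    by (simp add: algebra_simps)
  also have "\<dots> = A p * cnj (A p) + A q * cnj (B p) + B p * cnj (A q) + B q * cnj (B q)"
    by (simp only: sum.distrib sum_dl_left[OF p] sum_dl_left[OF q])
  finally show ?thesis .
qed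

definition wit :: "(nat \<times> nat \<Rightarrow> complex) \<Rightarrow> nat \<Rightarrow> nat \<Rightarrow> nat \<Rightarrow> nat \<Rightarrow> nat \<times> nat \<Rightarrow> complex" where
  "wit \<phi> p q r s = (\<lambda>(k,l). dl p k * (\<phi> (p,s) * dl r l - \<phi> (p,r) * dl s l)
                         + dl q k * (\<phi> (q,s) * dl r l - \<phi> (q,r) * dl s l))"

lemma witness_X:
  assumes r: "r < d" and s: "s < d"
  shows "(\<Sum>l<d. \<phi> (i,l) * wit \<phi> p q r s (k,l))
     = dl p k * (\<phi> (i,r) * \<phi> (p,s) - \<phi> (i,s) * \<phi> (p,r)) + dl q k * (\<phi> (i,r) * \<phi> (q,s) - \<phi> (i,s) * \<phi> (q,r))"
proof -
  have "(\<Sum>l<d. \<phi> (i,l) * wit \<phi> p q r s (k,l))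
    = dl p k * \<phi> (p,s) * (\<Sum>l<d. \<phi> (i,l) * dl r l) - dl p k * \<phi> (p,r) * (\<Sum>l<d. \<phi> (i,l) * dl s l)
     + dl q k * \<phi> (q,s) * (\<Sum>l<d. \<phi> (i,l) * dl r l) - dl q k * \<phi> (q,r) * (\<Sum>l<d. \<phi> (i,l) * dl s l)"
    unfolding wit_def by (simp add: algebra_simps sum.distrib sum_subtractf sum_distrib_left)
  also have "\<dots> = dl p k * (\<phi> (i,r) * \<phi> (p,s) - \<phi> (i,s) * \<phi> (p,r)) + dl q k * (\<phi> (i,r) * \<phi> (q,s) - \<phi> (i,s) * \<phi> (q,r))"
    by (simp only: sum_dl_right[OF r] sum_dl_right[OF s]) (simp add: algebra_simps)
  finally show ?thesis .
qed

lemma witness_reorder: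
  "(\<Sum>x\<in>{..<d}\<times>{..<d}. \<Sum>y\<in>{..<d}\<times>{..<d}. cnj (w x) * (\<phi> (fst x, snd y) * cnj (\<phi> (fst y, snd x))) * w y)
   = (\<Sum>i<d. \<Sum>k<d. (\<Sum>l<d. \<phi> (i,l) * w (k,l)) * cnj (\<Sum>j<d. \<phi> (k,j) * w (i,j)))"
proof -
  have "(\<Sum>x\<in>{..<d}\<times>{..<d}. \<Sum>y\<in>{..<d}\<times>{..<d}. cnj (w x) * (\<phi> (fst x, snd y) * cnj (\<phi> (fst y, snd x))) * w y)
    = (\<Sum>i<d. \<Sum>j<d. \<Sum>k<d. \<Sum>l<d. cnj (w (i,j)) * (\<phi> (i, l) * cnj (\<phi> (k, j))) * w (k,l))"
    by (simp add: sum_pair)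
  also have "\<dots> = (\<Sum>i<d. \<Sum>k<d. \<Sum>j<d. \<Sum>l<d. cnj (w (i,j)) * (\<phi> (i, l) * cnj (\<phi> (k, j))) * w (k,l))"
    by (rule sum.cong[OF refl]) (rule sum.swap)
  also have "\<dots> = (\<Sum>i<d. \<Sum>k<d. (\<Sum>l<d. \<phi> (i,l) * w (k,l)) * cnj (\<Sum>j<d. \<phi> (k,j) * w (i,j)))"
  proof (intro sum.cong[OF refl])
    fix i k
    have "(\<Sum>l<d. \<phi> (i,l) * w (k,l)) * cnj (\<Sum>j<d. \<phi> (k,j) * w (i,j))
        = (\<Sum>l<d. \<Sum>j<d. \<phi> (i,l) * w (k,l) * cnj (\<phi> (k,j) * w (i,j)))"
      by (simp add: cnj_sum sum_product)
    also have "\<dots> = (\<Sum>j<d. \<Sum>l<d. \<phi> (i,l) * w (k,l) * cnj (\<phi> (k,j) * w (i,j)))"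
      by (rule sum.swap)
    also have "\<dots> = (\<Sum>j<d. \<Sum>l<d. cnj (w (i,j)) * (\<phi> (i, l) * cnj (\<phi> (k, j))) * w (k,l))"
      by (simp add: algebra_simps)
    finally show "(\<Sum>j<d. \<Sum>l<d. cnj (w (i,j)) * (\<phi> (i, l) * cnj (\<phi> (k, j))) * w (k,l))
        = (\<Sum>l<d. \<phi> (i,l) * w (k,l)) * cnj (\<Sum>j<d. \<phi> (k,j) * w (i,j))" by simp
  qed
  finally show ?thesis .
qed

lemma witness_val:
  assumes p: "p < d" and q: "q < d" and r: "r < d" and s: "s < d"
  shows "(\<Sum>x\<in>{..<d}\<times>{..<d}. \<Sum>y\<in>{..<d}\<times>{..<d}. cnj (wit \<phi> p q r s x) * (\<phi> (fst x, snd y) * cnj (\<phi> (fst y, snd x))) * wit \<phi> p q r s y)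
     = - 2 * complex_of_real ((cmod (\<phi> (p,r) * \<phi> (q,s) - \<phi> (p,s) * \<phi> (q,r)))\<^sup>2)"
proof -
  define A where "A i = \<phi> (i,r) * \<phi> (p,s) - \<phi> (i,s) * \<phi> (p,r)" for i
  define B where "B i = \<phi> (i,r) * \<phi> (q,s) - \<phi> (i,s) * \<phi> (q,r)" for i
  define Dm where "Dm = \<phi> (p,r) * \<phi> (q,s) - \<phi> (p,s) * \<phi> (q,r)"
  have X: "(\<Sum>l<d. \<phi> (i,l) * wit \<phi> p q r s (k,l)) = dl p k * A i + dl q k * B i" for i k
    unfolding A_def B_def by (rule witness_X[OF r s])
  have "(\<Sum>x\<in>{..<d}\<times>{..<d}. \<Sum>y\<in>{..<d}\<times>{..<d}. cnj (wit \<phi> p q r s x) * (\<phi> (fst x, snd y) * cnj (\<phi> (fst y, snd x))) * wit \<phi> p q r s y)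
     = (\<Sum>i<d. \<Sum>k<d. (dl p k * A i + dl q k * B i) * cnj (dl p i * A k + dl q i * B k))"
    unfolding witness_reorder X ..
  also have "\<dots> = A p * cnj (A p) + A q * cnj (B p) + B p * cnj (A q) + B q * cnj (B q)"
    by (rule witness_c[OF p q])
  also have "\<dots> = - 2 * (Dm * cnj Dm)"
    unfolding A_def B_def Dm_def by (simp add: algebra_simps)
  also have "\<dots> = - 2 * complex_of_real ((cmod Dm)\<^sup>2)"
    by (simp only: complex_norm_square)
  finally show ?thesis unfolding Dm_def .
qed

lemma qf_indicator:
  assumes "z0 \<in> I" "finite I"
  shows "qf I N (\<lambda>x. if x = z0 then 1 else 0) = N z0 z0"
proof -
  have "qf I N (\<lambda>x. if x = z0 then 1 else 0) = (\<Sum>x\<in>I. if x = z0 then (\<Sum>y\<in>I. if y = z0 then N x y else 0) else 0)"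
    unfolding qf_def by (intro sum.cong refl) (auto intro!: sum.cong)
  then show ?thesis using assms by simp
qed

lemma single_slot:
  fixes N :: "(nat, nat) bop" and \<phi> :: "nat \<times> nat \<Rightarrow> complex"
  assumes psdN: "psd_on ({..<d}\<times>{..<d}) N" and psdT: "psd_on ({..<d}\<times>{..<d}) (ptB N)"
    and kill: "\<And>z a b. z \<in> {..<d}\<times>{..<d} \<Longrightarrow> bil d (\<lambda>i j. cnj (\<phi> (i,j))) a b = 0
                 \<Longrightarrow> bil d (\<lambda>i j. N z (i,j)) a b = 0"
    and p0: "p0 < d" and r0: "r0 < d" and nz: "\<phi> (p0,r0) \<noteq> 0"
    and p: "p < d" and q: "q < d" and r: "r < d" and s: "s < d"
    and Dnz: "\<phi> (p,r) * \<phi> (q,s) - \<phi> (p,s) * \<phi> (q,r) \<noteq> 0"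
  shows "\<forall>z\<in>{..<d}\<times>{..<d}. \<forall>z'\<in>{..<d}\<times>{..<d}. N z z' = 0"
proof -
  let ?D = "{..<d}\<times>{..<d}"
  define P0 where "P0 = cnj (\<phi> (p0,r0))"
  have P0nz: "P0 \<noteq> 0" using nz unfolding P0_def by simp
  define c where "c z = N z (p0,r0) / P0" for z
  have span: "N z (i,j) = c z * cnj (\<phi> (i,j))" if "z \<in> ?D" "i < d" "j < d" for z i j
    using span_lemma[of d "\<lambda>i j. cnj (\<phi> (i,j))" "\<lambda>i j. N z (i,j)", OF kill[OF that(1)] p0 r0 _ that(2,3)]
      nz unfolding c_def P0_def by simp
  define z0 where "z0 = (p0, r0)"
  have z0D: "z0 \<in> ?D" using p0 r0 unfolding z0_def by simp
  define \<gamma> where "\<gamma> = cnj (c z0) / P0"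
  have cz: "c z = \<gamma> * \<phi> z" if z: "z \<in> ?D" for z
  proof -
    obtain i j where zij: "z = (i,j)" "i < d" "j < d" using z by auto
    have "N z z0 = cnj (N z0 z)" using psd_herm[OF psdN z z0D] .
    also have "\<dots> = cnj (c z0) * \<phi> z" using span[OF z0D zij(2,3)] zij(1) by simp
    finally have "N z z0 = cnj (c z0) * \<phi> z" .
    then show ?thesis unfolding c_def \<gamma>_def z0_def by simp
  qed
  have Nform: "N (i,j) (k,l) = \<gamma> * \<phi> (i,j) * cnj (\<phi> (k,l))" if "i < d" "j < d" "k < d" "l < d" for i j k l
    using span[of "(i,j)" k l] cz[of "(i,j)"] that by simp
  have "qf ?D N (\<lambda>x. if x = z0 then 1 else 0) = N z0 z0" by (rule qf_indicator[OF z0D]) simp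
  also have "\<dots> = \<gamma> * complex_of_real ((cmod (\<phi> z0))\<^sup>2)"
    using Nform[OF p0 r0 p0 r0] unfolding z0_def complex_norm_square by (simp add: mult.assoc)
  finally have g1: "qf ?D N (\<lambda>x. if x = z0 then 1 else 0) = \<gamma> * complex_of_real ((cmod (\<phi> z0))\<^sup>2)" .
  have pos: "(cmod (\<phi> z0))\<^sup>2 > 0" using nz unfolding z0_def by simp
  have "Im (\<gamma> * complex_of_real ((cmod (\<phi> z0))\<^sup>2)) = 0" using psd_qf[OF psdN] g1 by metis
  then have gIm: "Im \<gamma> = 0" using pos by simp
  let ?w = "wit \<phi> p q r s"
  define Dm where "Dm = \<phi> (p,r) * \<phi> (q,s) - \<phi> (p,s) * \<phi> (q,r)"
  have "qf ?D (ptB N) ?w = (\<Sum>x\<in>?D. \<Sum>y\<in>?D. \<gamma> * (cnj (?w x) * (\<phi> (fst x, snd y) * cnj (\<phi> (fst y, snd x))) * ?w y))"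
    unfolding qf_def by (intro sum.cong refl) (auto simp: ptB_def Nform)
  also have "\<dots> = \<gamma> * (- 2 * complex_of_real ((cmod Dm)\<^sup>2))"
    unfolding Dm_def witness_val[OF p q r s, symmetric] by (simp add: sum_distrib_left)
  finally have g2: "qf ?D (ptB N) ?w = \<gamma> * (- 2 * complex_of_real ((cmod Dm)\<^sup>2))" .
  have Dpos: "(cmod Dm)\<^sup>2 > 0" using Dnz unfolding Dm_def by simp
  have "0 \<le> Re (\<gamma> * (- 2 * complex_of_real ((cmod Dm)\<^sup>2)))" using psd_qf[OF psdT] g2 by metis
  then have "Re \<gamma> \<le> 0" using Dpos gIm by (simp add: mult_le_0_iff)
  moreover have "0 \<le> Re (\<gamma> * complex_of_real ((cmod (\<phi> z0))\<^sup>2))" using psd_qf[OF psdN] g1 by metis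
  then have "Re \<gamma> \<ge> 0" using pos gIm by (simp add: zero_le_mult_iff)
  ultimately have "\<gamma> = 0" using gIm complex_eqI[of \<gamma> 0] by simp
  then show ?thesis using Nform by auto
qed

definition cmpr :: "'x set \<Rightarrow> ('z \<Rightarrow> 'x \<Rightarrow> complex) \<Rightarrow> ('x \<Rightarrow> 'x \<Rightarrow> complex) \<Rightarrow> 'z \<Rightarrow> 'z \<Rightarrow> complex" where
  "cmpr S V M z z' = (\<Sum>X\<in>S. \<Sum>Y\<in>S. cnj (V z X) * M X Y * V z' Y)"

lemma swap4:
  "(\<Sum>a\<in>A. \<Sum>b\<in>B. \<Sum>c\<in>C. \<Sum>e\<in>E. f a b c e) = (\<Sum>c\<in>C. \<Sum>e\<in>E. \<Sum>a\<in>A. \<Sum>b\<in>B. f a b c e)"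
proof -
  have "(\<Sum>a\<in>A. \<Sum>b\<in>B. \<Sum>c\<in>C. \<Sum>e\<in>E. f a b c e) = (\<Sum>a\<in>A. \<Sum>c\<in>C. \<Sum>b\<in>B. \<Sum>e\<in>E. f a b c e)"
    by (rule sum.cong[OF refl]) (rule sum.swap)
  also have "\<dots> = (\<Sum>a\<in>A. \<Sum>c\<in>C. \<Sum>e\<in>E. \<Sum>b\<in>B. f a b c e)"
    by (intro sum.cong[OF refl]) (rule sum.swap)
  also have "\<dots> = (\<Sum>c\<in>C. \<Sum>a\<in>A. \<Sum>e\<in>E. \<Sum>b\<in>B. f a b c e)"
    by (rule sum.swap)
  also have "\<dots> = (\<Sum>c\<in>C. \<Sum>e\<in>E. \<Sum>a\<in>A. \<Sum>b\<in>B. f a b c e)"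
    by (rule sum.cong[OF refl]) (rule sum.swap)
  finally show ?thesis .
qed

lemma qf_comp:
  "qf Z (cmpr S V M) x = qf S M (\<lambda>X. \<Sum>z\<in>Z. x z * V z X)"
proof -
  have "qf Z (cmpr S V M) x = (\<Sum>z\<in>Z. \<Sum>z'\<in>Z. \<Sum>X\<in>S. \<Sum>Y\<in>S. cnj (x z) * cnj (V z X) * M X Y * (x z' * V z' Y))"
    unfolding qf_def cmpr_def by (simp add: sum_distrib_left sum_distrib_right algebra_simps)
  also have "\<dots> = (\<Sum>X\<in>S. \<Sum>Y\<in>S. \<Sum>z\<in>Z. \<Sum>z'\<in>Z. cnj (x z) * cnj (V z X) * M X Y * (x z' * V z' Y))"
    by (rule swap4[where f="\<lambda>z z' X Y. cnj (x z) * cnj (V z X) * M X Y * (x z' * V z' Y)"])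
  also have "\<dots> = qf S M (\<lambda>X. \<Sum>z\<in>Z. x z * V z X)"
    unfolding qf_def by (simp add: sum_distrib_left sum_distrib_right algebra_simps cnj_sum)
  finally show ?thesis .
qed

lemma comp_herm:
  assumes "psd_on S M"
  shows "cmpr S V M z z' = cnj (cmpr S V M z' z)"
proof -
  have "cnj (cmpr S V M z' z) = (\<Sum>X\<in>S. \<Sum>Y\<in>S. V z' X * cnj (M X Y) * cnj (V z Y))"
    unfolding cmpr_def by (simp add: cnj_sum)
  also have "\<dots> = (\<Sum>X\<in>S. \<Sum>Y\<in>S. V z' X * M Y X * cnj (V z Y))"
  proof (intro sum.cong refl)
    fix X Y assume "X \<in> S" "Y \<in> S"
    then have "cnj (M X Y) = M Y X" using psd_herm[OF assms, of Y X] by simp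
    then show "V z' X * cnj (M X Y) * cnj (V z Y) = V z' X * M Y X * cnj (V z Y)" by simp
  qed
  also have "\<dots> = (\<Sum>Y\<in>S. \<Sum>X\<in>S. V z' X * M Y X * cnj (V z Y))"
    by (rule sum.swap)
  also have "\<dots> = cmpr S V M z z'"
    unfolding cmpr_def by (intro sum.cong refl) (simp add: algebra_simps)
  finally show ?thesis by simp
qed

lemma psd_comp:
  assumes "psd_on S M"
  shows "psd_on Z (cmpr S V M)"
  unfolding psd_on_def Let_def
proof (intro conjI ballI allI)
  fix x y show "cmpr S V M x y = cnj (cmpr S V M y x)" by (rule comp_herm[OF assms])
next
  fix v :: "_ \<Rightarrow> complex"
  have "Im (qf Z (cmpr S V M) v) = 0 \<and> 0 \<le> Re (qf Z (cmpr S V M) v)"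
    unfolding qf_comp by (rule psd_qf[OF assms])
  then show "Im (\<Sum>x\<in>Z. \<Sum>y\<in>Z. cnj (v x) * cmpr S V M x y * v y) = 0"
       "0 \<le> Re (\<Sum>x\<in>Z. \<Sum>y\<in>Z. cnj (v x) * cmpr S V M x y * v y)"
    unfolding qf_def by auto
qed

definition Vs :: "nat \<Rightarrow> (nat list \<Rightarrow> complex) \<Rightarrow> (nat list \<Rightarrow> complex) \<Rightarrow> nat \<times> nat \<Rightarrow> nat list \<times> nat list \<Rightarrow> complex" where
  "Vs t FA GB z X = (if fst X ! t = fst z \<and> snd X ! t = snd z then FA (fst X) * GB (snd X) else 0)"

lemma words_nth: "a \<in> words m {..<d} \<Longrightarrow> t < m \<Longrightarrow> a ! t < d"
  unfolding words_def by (auto dest: nth_mem)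

lemma finite_words: "finite (words m {..<(d::nat)})"
  unfolding words_def using finite_lists_length_eq[of "{..<d}" m] by (simp add: conj_commute)

lemma Vs_lin:
  assumes t: "t < m" and X: "X \<in> words m {..<d} \<times> words m {..<d}"
  shows "(\<Sum>z\<in>{..<d}\<times>{..<d}. x z * Vs t FA GB z X) = x (fst X ! t, snd X ! t) * FA (fst X) * GB (snd X)"
proof -
  have mem: "(fst X ! t, snd X ! t) \<in> {..<d}\<times>{..<d}" using X t words_nth by auto
  have "(\<Sum>z\<in>{..<d}\<times>{..<d}. x z * Vs t FA GB z X)
      = (\<Sum>z\<in>{..<d}\<times>{..<d}. if (fst X ! t, snd X ! t) = z then x z * FA (fst X) * GB (snd X) else 0)"
    unfolding Vs_def by (intro sum.cong refl) auto
  also have "\<dots> = x (fst X ! t, snd X ! t) * FA (fst X) * GB (snd X)"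
    using mem by simp
  finally show ?thesis .
qed

lemma ptB_cmpr:
  fixes M :: "(nat list, nat list) bop"
  shows "ptB (cmpr (W\<times>W) (Vs t FA GB) M) z z' = cmpr (W\<times>W) (Vs t FA (\<lambda>b. cnj (GB b))) (ptB M) z z'"
proof -
  obtain i j where z: "z = (i,j)" by (cases z)
  obtain k l where z': "z' = (k,l)" by (cases z')
  define T where "T a \<beta> a' \<beta>' = cnj (Vs t FA GB (i,l) (a,\<beta>)) * M (a,\<beta>) (a',\<beta>') * Vs t FA GB (k,j) (a',\<beta>')" for a \<beta> a' \<beta>'
  have L: "ptB (cmpr (W\<times>W) (Vs t FA GB) M) z z' = (\<Sum>a\<in>W. \<Sum>\<beta>\<in>W. \<Sum>a'\<in>W. \<Sum>\<beta>'\<in>W. T a \<beta> a' \<beta>')"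
    unfolding z z' ptB_def cmpr_def T_def by (simp add: sum_pair)
  have R: "cmpr (W\<times>W) (Vs t FA (\<lambda>b. cnj (GB b))) (ptB M) z z' = (\<Sum>a\<in>W. \<Sum>b\<in>W. \<Sum>a'\<in>W. \<Sum>b'\<in>W. T a b' a' b)"
  proof -
    have "cmpr (W\<times>W) (Vs t FA (\<lambda>b. cnj (GB b))) (ptB M) z z' = (\<Sum>a\<in>W. \<Sum>b\<in>W. \<Sum>a'\<in>W. \<Sum>b'\<in>W.
       cnj (Vs t FA (\<lambda>b. cnj (GB b)) (i,j) (a,b)) * ptB M (a,b) (a',b') * Vs t FA (\<lambda>b. cnj (GB b)) (k,l) (a',b'))"
      unfolding z z' cmpr_def by (simp add: sum_pair)
    also have "\<dots> = (\<Sum>a\<in>W. \<Sum>b\<in>W. \<Sum>a'\<in>W. \<Sum>b'\<in>W. T a b' a' b)"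
      by (intro sum.cong refl) (auto simp: T_def Vs_def ptB_def)
    finally show ?thesis .
  qed
  have "(\<Sum>b\<in>W. \<Sum>a'\<in>W. \<Sum>b'\<in>W. T a b' a' b) = (\<Sum>\<beta>\<in>W. \<Sum>a'\<in>W. \<Sum>\<beta>'\<in>W. T a \<beta> a' \<beta>')" for a
  proof -
    have "(\<Sum>b\<in>W. \<Sum>a'\<in>W. \<Sum>b'\<in>W. T a b' a' b) = (\<Sum>a'\<in>W. \<Sum>b\<in>W. \<Sum>b'\<in>W. T a b' a' b)"
      by (rule sum.swap)
    also have "\<dots> = (\<Sum>a'\<in>W. \<Sum>b'\<in>W. \<Sum>b\<in>W. T a b' a' b)"
      by (rule sum.cong[OF refl]) (rule sum.swap)
    also have "\<dots> = (\<Sum>b'\<in>W. \<Sum>a'\<in>W. \<Sum>b\<in>W. T a b' a' b)"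
      by (rule sum.swap)
    finally show ?thesis .
  qed
  then show ?thesis unfolding L R by simp
qed

definition pv :: "nat \<Rightarrow> (nat \<Rightarrow> nat \<Rightarrow> complex) \<Rightarrow> (nat \<Rightarrow> nat \<Rightarrow> complex) \<Rightarrow> nat list \<times> nat list \<Rightarrow> complex" where
  "pv m f g X = (\<Prod>u<m. f u (fst X ! u)) * (\<Prod>u<m. g u (snd X ! u))"

definition kills :: "'x set \<Rightarrow> ('x \<Rightarrow> 'x \<Rightarrow> complex) \<Rightarrow> ('x \<Rightarrow> complex) \<Rightarrow> bool" where
  "kills S M v \<longleftrightarrow> (\<forall>X\<in>S. (\<Sum>Y\<in>S. M X Y * v Y) = 0)"

definition inG :: "nat \<Rightarrow> (nat \<times> nat \<Rightarrow> complex) \<Rightarrow> (nat \<Rightarrow> complex) \<Rightarrow> (nat \<Rightarrow> complex) \<Rightarrow> bool" where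
  "inG d \<phi> \<alpha> \<beta> \<longleftrightarrow> bil d (\<lambda>i j. cnj (\<phi> (i,j))) \<alpha> \<beta> = 0"

lemma prod_remove_upd:
  assumes "t < m"
  shows "(\<Prod>u<m. (f(t:=\<alpha>)) u (a ! u)) = \<alpha> (a ! t) * (\<Prod>u\<in>{..<m}-{t}. f u (a ! u))"
proof -
  have "(\<Prod>u<m. (f(t:=\<alpha>)) u (a ! u)) = (f(t:=\<alpha>)) t (a ! t) * (\<Prod>u\<in>{..<m}-{t}. (f(t:=\<alpha>)) u (a ! u))"
    using assms by (subst prod.remove[of "{..<m}" t]) auto
  also have "(\<Prod>u\<in>{..<m}-{t}. (f(t:=\<alpha>)) u (a ! u)) = (\<Prod>u\<in>{..<m}-{t}. f u (a ! u))"
    by (rule prod.cong) auto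
  finally show ?thesis by simp
qed

lemma qf_cong: "(\<And>x. x \<in> I \<Longrightarrow> v x = w x) \<Longrightarrow> qf I M v = qf I M w"
  unfolding qf_def by (intro sum.cong refl) auto

lemma kill_step:
  fixes M :: "(nat list, nat list) bop" and \<phi> :: "nat \<times> nat \<Rightarrow> complex" and m d :: nat
  defines "WW \<equiv> words m {..<d} \<times> words m {..<d}"
  assumes psdM: "psd_on WW M" and psdT: "psd_on WW (ptB M)"
    and t: "t < m"
    and IH: "\<And>\<alpha> \<beta>. inG d \<phi> \<alpha> \<beta> \<Longrightarrow> kills WW M (pv m (f(t:=\<alpha>)) (g(t:=\<beta>)))"
    and p0: "p0 < d" and r0: "r0 < d" and nz: "\<phi> (p0,r0) \<noteq> 0"
    and p: "p < d" and q: "q < d" and r: "r < d" and s: "s < d"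
    and Dnz: "\<phi> (p,r) * \<phi> (q,s) - \<phi> (p,s) * \<phi> (q,r) \<noteq> 0"
  shows "kills WW M (pv m f g)"
proof -
  define FA where "FA a = (\<Prod>u\<in>{..<m}-{t}. f u (a ! u))" for a
  define GB where "GB b = (\<Prod>u\<in>{..<m}-{t}. g u (b ! u))" for b
  define N where "N = cmpr WW (Vs t FA GB) M"
  have finWW: "finite WW" unfolding WW_def using finite_words by simp
  have pvr: "pv m (f(t:=\<alpha>)) (g(t:=\<beta>)) X = \<alpha> (fst X ! t) * \<beta> (snd X ! t) * FA (fst X) * GB (snd X)" for \<alpha> \<beta> X
    unfolding pv_def FA_def GB_def prod_remove_upd[OF t] by (simp add: algebra_simps)
  have psdN: "psd_on ({..<d}\<times>{..<d}) N" unfolding N_def by (rule psd_comp[OF psdM])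
  have "ptB N = cmpr WW (Vs t FA (\<lambda>b. cnj (GB b))) (ptB M)"
    unfolding N_def WW_def by (intro ext) (rule ptB_cmpr)
  then have psdTN: "psd_on ({..<d}\<times>{..<d}) (ptB N)" using psd_comp[OF psdT] by simp
  have lin: "(\<Sum>z\<in>{..<d}\<times>{..<d}. x z * Vs t FA GB z Y) = x (fst Y ! t, snd Y ! t) * FA (fst Y) * GB (snd Y)"
    if "Y \<in> WW" for x Y
    using Vs_lin[OF t, of Y d x FA GB] that unfolding WW_def by simp
  have killN: "bil d (\<lambda>i j. N z (i,j)) \<alpha> \<beta> = 0"
    if z: "z \<in> {..<d}\<times>{..<d}" and G: "bil d (\<lambda>i j. cnj (\<phi> (i,j))) \<alpha> \<beta> = 0" for z \<alpha> \<beta>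
  proof -
    have k: "kills WW M (pv m (f(t:=\<alpha>)) (g(t:=\<beta>)))" using IH G unfolding inG_def by blast
    have "bil d (\<lambda>i j. N z (i,j)) \<alpha> \<beta> = (\<Sum>z'\<in>{..<d}\<times>{..<d}. N z z' * (\<alpha> (fst z') * \<beta> (snd z')))"
      unfolding bil_def by (simp add: sum_pair mult.assoc)
    also have "\<dots> = (\<Sum>X\<in>WW. \<Sum>Y\<in>WW. cnj (Vs t FA GB z X) * M X Y *
                      (\<Sum>z'\<in>{..<d}\<times>{..<d}. (\<alpha> (fst z') * \<beta> (snd z')) * Vs t FA GB z' Y))"
      unfolding N_def cmpr_def
      by (simp add: sum_distrib_left sum_distrib_right algebra_simps)
         (subst (2) sum.swap, subst sum.swap, simp)
    also have "\<dots> = (\<Sum>X\<in>WW. \<Sum>Y\<in>WW. cnj (Vs t FA GB z X) * (M X Y * pv m (f(t:=\<alpha>)) (g(t:=\<beta>)) Y))"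
    proof (intro sum.cong refl)
      fix X Y assume "Y \<in> WW"
      then show "cnj (Vs t FA GB z X) * M X Y * (\<Sum>z'\<in>{..<d}\<times>{..<d}. (\<alpha> (fst z') * \<beta> (snd z')) * Vs t FA GB z' Y)
         = cnj (Vs t FA GB z X) * (M X Y * pv m (f(t:=\<alpha>)) (g(t:=\<beta>)) Y)"
        using lin[of Y "\<lambda>z'. \<alpha> (fst z') * \<beta> (snd z')"] pvr[of \<alpha> \<beta> Y] by simp
    qed
    also have "\<dots> = (\<Sum>X\<in>WW. cnj (Vs t FA GB z X) * (\<Sum>Y\<in>WW. M X Y * pv m (f(t:=\<alpha>)) (g(t:=\<beta>)) Y))"
      by (simp add: sum_distrib_left)
    also have "\<dots> = 0" using k unfolding kills_def by simp
    finally show ?thesis .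
  qed
  have N0: "\<forall>z\<in>{..<d}\<times>{..<d}. \<forall>z'\<in>{..<d}\<times>{..<d}. N z z' = 0"
    by (rule single_slot[OF psdN psdTN killN p0 r0 nz p q r s Dnz])
  define x where "x z = f t (fst z) * g t (snd z)" for z
  have "qf ({..<d}\<times>{..<d}) N x = 0" unfolding qf_def
    by (intro sum.neutral ballI) (simp add: N0)
  then have "qf WW M (\<lambda>X. \<Sum>z\<in>{..<d}\<times>{..<d}. x z * Vs t FA GB z X) = 0"
    unfolding N_def qf_comp .
  moreover have "qf WW M (\<lambda>X. \<Sum>z\<in>{..<d}\<times>{..<d}. x z * Vs t FA GB z X) = qf WW M (pv m f g)"
  proof (rule qf_cong)
    fix X assume X: "X \<in> WW"
    have "pv m f g X = pv m (f(t:=f t)) (g(t:=g t)) X" by simp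
    also have "\<dots> = x (fst X ! t, snd X ! t) * FA (fst X) * GB (snd X)" unfolding pvr x_def by simp
    finally show "(\<Sum>z\<in>{..<d}\<times>{..<d}. x z * Vs t FA GB z X) = pv m f g X" using lin[OF X] by simp
  qed
  ultimately have "qf WW M (pv m f g) = 0" by simp
  then show ?thesis unfolding kills_def using psd_kernel[OF finWW psdM] by blast
qed

lemma kill_all:
  fixes M :: "(nat list, nat list) bop" and \<phi> :: "nat \<times> nat \<Rightarrow> complex" and m d :: nat
  defines "WW \<equiv> words m {..<d} \<times> words m {..<d}"
  assumes psdM: "psd_on WW M" and psdT: "psd_on WW (ptB M)"
    and base: "\<And>f g. (\<forall>u<m. inG d \<phi> (f u) (g u)) \<Longrightarrow> kills WW M (pv m f g)"
    and p0: "p0 < d" and r0: "r0 < d" and nz: "\<phi> (p0,r0) \<noteq> 0"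
    and p: "p < d" and q: "q < d" and r: "r < d" and s: "s < d"
    and Dnz: "\<phi> (p,r) * \<phi> (q,s) - \<phi> (p,s) * \<phi> (q,r) \<noteq> 0"
  shows "kills WW M (pv m f g)"
proof -
  have main: "\<forall>f g. card {u. u < m \<and> \<not> inG d \<phi> (f u) (g u)} \<le> k \<longrightarrow> kills WW M (pv m f g)" for k
  proof (induction k)
    case 0
    show ?case
    proof (intro allI impI)
      fix f g assume "card {u. u < m \<and> \<not> inG d \<phi> (f u) (g u)} \<le> 0"
      then have "{u. u < m \<and> \<not> inG d \<phi> (f u) (g u)} = {}" by simp
      then show "kills WW M (pv m f g)" using base by blast
    qed
  next
    case (Suc k)
    show ?case
    proof (intro allI impI)
      fix f g assume c: "card {u. u < m \<and> \<not> inG d \<phi> (f u) (g u)} \<le> Suc k"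
      show "kills WW M (pv m f g)"
      proof (cases "card {u. u < m \<and> \<not> inG d \<phi> (f u) (g u)} \<le> k")
        case True then show ?thesis using Suc.IH by blast
      next
        case False
        then have "{u. u < m \<and> \<not> inG d \<phi> (f u) (g u)} \<noteq> {}" by (metis card.empty le0)
        then obtain t where t: "t < m" "\<not> inG d \<phi> (f t) (g t)" by auto
        have fin: "finite {u. u < m \<and> \<not> inG d \<phi> (f u) (g u)}" by simp
        show ?thesis unfolding WW_def
        proof (rule kill_step[OF psdM[unfolded WW_def] psdT[unfolded WW_def] t(1) _ p0 r0 nz p q r s Dnz])
          fix \<alpha> \<beta> assume G: "inG d \<phi> \<alpha> \<beta>"
          have sub: "{u. u < m \<and> \<not> inG d \<phi> ((f(t:=\<alpha>)) u) ((g(t:=\<beta>)) u)}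
                 \<subseteq> {u. u < m \<and> \<not> inG d \<phi> (f u) (g u)} - {t}" using G by auto
          have "card {u. u < m \<and> \<not> inG d \<phi> ((f(t:=\<alpha>)) u) ((g(t:=\<beta>)) u)}
               \<le> card ({u. u < m \<and> \<not> inG d \<phi> (f u) (g u)} - {t})"
            by (rule card_mono[OF _ sub]) simp
          also have "\<dots> = card {u. u < m \<and> \<not> inG d \<phi> (f u) (g u)} - 1"
            using t by (simp add: card_Diff_singleton)
          also have "\<dots> \<le> k" using c by simp
          finally show "kills (words m {..<d} \<times> words m {..<d}) M (pv m (f(t:=\<alpha>)) (g(t:=\<beta>)))"
            using Suc.IH unfolding WW_def by blast
        qed
      qed
    qed
  qed
  have "card {u. u < m \<and> \<not> inG d \<phi> (f u) (g u)} \<le> card {..<m}"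
    by (rule card_mono) auto
  then show ?thesis using main[of m] by simp
qed

lemma kills_zero:
  fixes M :: "(nat list, nat list) bop" and m d :: nat
  defines "WW \<equiv> words m {..<d} \<times> words m {..<d}"
  assumes K: "\<And>f g. kills WW M (pv m f g)"
    and X: "X \<in> WW" and Y: "Y \<in> WW"
  shows "M X Y = 0"
proof -
  obtain a0 b0 where Y0: "Y = (a0, b0)" by (cases Y)
  define f where "f u i = (if i = a0 ! u then 1 else 0 :: complex)" for u i
  define g where "g u j = (if j = b0 ! u then 1 else 0 :: complex)" for u j
  have pvY: "pv m f g Z = (if Z = Y then 1 else 0)" if Z: "Z \<in> WW" for Z
  proof -
    obtain a b where Zab: "Z = (a,b)" by (cases Z)
    have la: "length a = m" "length b = m" "length a0 = m" "length b0 = m"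
      using Z Y unfolding Zab Y0 WW_def words_def by auto
    have "(\<Prod>u<m. f u (a ! u)) = (if a = a0 then 1 else 0)"
    proof (cases "a = a0")
      case True then show ?thesis unfolding f_def by simp
    next
      case False
      then obtain u where "u < m" "a ! u \<noteq> a0 ! u" using la nth_equalityI by metis
      then have "f u (a ! u) = 0" unfolding f_def by simp
      then show ?thesis using False \<open>u < m\<close> by (metis finite_lessThan lessThan_iff prod_zero_iff)
    qed
    moreover have "(\<Prod>u<m. g u (b ! u)) = (if b = b0 then 1 else 0)"
    proof (cases "b = b0")
      case True then show ?thesis unfolding g_def by simp
    next
      case False
      then obtain u where "u < m" "b ! u \<noteq> b0 ! u" using la nth_equalityI by metis
      then have "g u (b ! u) = 0" unfolding g_def by simp
      then show ?thesis using False \<open>u < m\<close> by (metis finite_lessThan lessThan_iff prod_zero_iff)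
    qed
    ultimately show ?thesis unfolding pv_def Zab Y0 by simp
  qed
  have "0 = (\<Sum>Z\<in>WW. M X Z * pv m f g Z)" using K X unfolding kills_def by simp
  also have "\<dots> = (\<Sum>Z\<in>WW. if Z = Y then M X Z else 0)"
    by (intro sum.cong refl) (simp add: pvY)
  also have "\<dots> = M X Y" using Y unfolding WW_def using finite_words by simp
  finally show ?thesis by simp
qed

lemma words_0: "words 0 A = {[]}"
  unfolding words_def by auto

lemma words_Suc: "words (Suc m) A = (\<lambda>(i,w). i # w) ` (A \<times> words m A)"
proof
  show "words (Suc m) A \<subseteq> (\<lambda>(i,w). i # w) ` (A \<times> words m A)"
  proof
    fix xs assume "xs \<in> words (Suc m) A"
    then obtain y ys where "xs = y # ys" "length ys = m" "y \<in> A" "set ys \<subseteq> A"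
      unfolding words_def by (auto simp: length_Suc_conv)
    then show "xs \<in> (\<lambda>(i,w). i # w) ` (A \<times> words m A)" unfolding words_def by auto
  qed
  show "(\<lambda>(i,w). i # w) ` (A \<times> words m A) \<subseteq> words (Suc m) A"
    unfolding words_def by auto
qed

lemma sum_words_Suc: "(\<Sum>a\<in>words (Suc m) A. F a) = (\<Sum>i\<in>A. \<Sum>w\<in>words m A. F (i # w))"
proof -
  have inj: "inj_on (\<lambda>(i,w). i # w) (A \<times> words m A)" by (auto simp: inj_on_def)
  have "(\<Sum>a\<in>words (Suc m) A. F a) = (\<Sum>x\<in>A \<times> words m A. F ((\<lambda>(i,w). i # w) x))"
    unfolding words_Suc by (rule sum.reindex[OF inj, unfolded comp_def])
  also have "\<dots> = (\<Sum>i\<in>A. \<Sum>w\<in>words m A. F (i # w))" by (simp add: sum_pair)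
  finally show ?thesis .
qed

lemma prod_sum_words:
  fixes h :: "nat \<Rightarrow> 'a \<Rightarrow> 'b \<Rightarrow> complex"
  shows "(\<Prod>t<m. \<Sum>i\<in>A. \<Sum>j\<in>B. h t i j) = (\<Sum>a\<in>words m A. \<Sum>b\<in>words m B. \<Prod>t<m. h t (a ! t) (b ! t))"
proof (induction m arbitrary: h)
  case 0
  then show ?case by (simp add: words_0)
next
  case (Suc m)
  define H where "H a b = (\<Prod>t<m. h (Suc t) (a ! t) (b ! t))" for a b
  have "(\<Prod>t<Suc m. \<Sum>i\<in>A. \<Sum>j\<in>B. h t i j)
      = (\<Sum>i\<in>A. \<Sum>j\<in>B. h 0 i j) * (\<Prod>t<m. \<Sum>i\<in>A. \<Sum>j\<in>B. h (Suc t) i j)"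
    by (rule prod.lessThan_Suc_shift)
  also have "\<dots> = (\<Sum>i\<in>A. \<Sum>j\<in>B. h 0 i j) * (\<Sum>a\<in>words m A. \<Sum>b\<in>words m B. H a b)"
    unfolding H_def using Suc.IH[of "\<lambda>t. h (Suc t)"] by simp
  also have "\<dots> = (\<Sum>i\<in>A. \<Sum>a\<in>words m A. \<Sum>j\<in>B. \<Sum>b\<in>words m B. h 0 i j * H a b)"
    by (simp only: sum_product)
  also have "\<dots> = (\<Sum>a\<in>words (Suc m) A. \<Sum>b\<in>words (Suc m) B. \<Prod>t<Suc m. h t (a ! t) (b ! t))"
    unfolding sum_words_Suc H_def by (simp only: prod.lessThan_Suc_shift nth_Cons_0 nth_Cons_Suc)
  finally show ?case .
qed

lemma bid_cnj: "cnj (bid x y) = bid y x"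
  unfolding bid_def by auto

lemma sum_bid_left: "z \<in> I \<Longrightarrow> finite I \<Longrightarrow> (\<Sum>k\<in>I. bid z k * h k) = h z"
proof -
  assume "z \<in> I" "finite I"
  have "(\<Sum>k\<in>I. bid z k * h k) = (\<Sum>k\<in>I. if z = k then h k else 0)"
    unfolding bid_def by (intro sum.cong refl) auto
  then show ?thesis using \<open>z \<in> I\<close> \<open>finite I\<close> by simp
qed

lemma sum_bid_right: "z \<in> I \<Longrightarrow> finite I \<Longrightarrow> (\<Sum>k\<in>I. h k * bid k z) = h z"
proof -
  assume "z \<in> I" "finite I"
  have "(\<Sum>k\<in>I. h k * bid k z) = (\<Sum>k\<in>I. if k = z then h k else 0)"
    unfolding bid_def by (intro sum.cong refl) auto
  then show ?thesis using \<open>z \<in> I\<close> \<open>finite I\<close> by simp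
qed

lemma sum_psd_zero:
  assumes "finite K" "\<And>k. k \<in> K \<Longrightarrow> Im (z k) = 0 \<and> 0 \<le> Re (z k)" "(\<Sum>k\<in>K. z k) = 0"
  shows "\<forall>k\<in>K. z k = 0"
proof -
  have "(\<Sum>k\<in>K. Re (z k)) = 0" using arg_cong[OF assms(3), of Re] by (simp add: Re_sum)
  then have "\<forall>k\<in>K. Re (z k) = 0" using sum_nonneg_eq_0_iff[OF assms(1), of "\<lambda>k. Re (z k)"] assms(2) by blast
  then show ?thesis using assms(2) by (simp add: complex_eq_iff)
qed

lemma base_kill:
  fixes M :: "(nat list, nat list) bop" and \<phi> :: "nat \<times> nat \<Rightarrow> complex" and m d :: nat
    and c :: complex
  defines "WW \<equiv> words m {..<d} \<times> words m {..<d}"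
    and "Q \<equiv> (\<lambda>z z'. bid z z' - \<phi> z * cnj (\<phi> z'))"
  assumes unit: "unit_vec d \<phi>" and psdM: "psd_on WW M" and c: "c \<noteq> 0"
    and tr0: "tr_prod WW M (btpow m (\<lambda>x y. Q x y / c)) = 0"
    and G: "\<forall>u<m. inG d \<phi> (f u) (g u)"
  shows "kills WW M (pv m f g)"
proof -
  let ?D = "{..<d}\<times>{..<d}"
  have finD: "finite ?D" by simp
  have finWW: "finite WW" unfolding WW_def using finite_words by simp
  have u1: "(\<Sum>k\<in>?D. cnj (\<phi> k) * \<phi> k) = 1"
  proof -
    have "(\<Sum>k\<in>?D. cnj (\<phi> k) * \<phi> k) = of_real (\<Sum>k\<in>?D. (cmod (\<phi> k))\<^sup>2)"
      unfolding of_real_sum by (simp only: cnj_mult_self)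
    then show ?thesis using unit unfolding unit_vec_def by simp
  qed
  have Qgram: "(\<Sum>k\<in>?D. Q z k * cnj (Q z' k)) = Q z z'" if z: "z \<in> ?D" and z': "z' \<in> ?D" for z z'
  proof -
    have "(\<Sum>k\<in>?D. Q z k * cnj (Q z' k)) = (\<Sum>k\<in>?D. bid z k * bid k z') - (\<Sum>k\<in>?D. bid z k * \<phi> k) * cnj (\<phi> z')
       - \<phi> z * (\<Sum>k\<in>?D. cnj (\<phi> k) * bid k z') + \<phi> z * (\<Sum>k\<in>?D. cnj (\<phi> k) * \<phi> k) * cnj (\<phi> z')"
      unfolding Q_def by (simp add: bid_cnj algebra_simps sum.distrib sum_subtractf sum_distrib_left sum_distrib_right)
    also have "\<dots> = Q z z'"
      unfolding u1 sum_bid_left[OF z finD] sum_bid_right[OF z' finD] Q_def by simp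
    finally show ?thesis .
  qed
  have Qfix: "(\<Sum>k\<in>?D. Q z k * (\<alpha> (fst k) * \<beta> (snd k))) = \<alpha> (fst z) * \<beta> (snd z)"
    if z: "z \<in> ?D" and g: "inG d \<phi> \<alpha> \<beta>" for z \<alpha> \<beta>
  proof -
    have b0: "(\<Sum>k\<in>?D. cnj (\<phi> k) * (\<alpha> (fst k) * \<beta> (snd k))) = 0"
      using g unfolding inG_def bil_def by (simp add: sum_pair mult.assoc)
    have "(\<Sum>k\<in>?D. Q z k * (\<alpha> (fst k) * \<beta> (snd k)))
        = (\<Sum>k\<in>?D. bid z k * (\<alpha> (fst k) * \<beta> (snd k))) - \<phi> z * (\<Sum>k\<in>?D. cnj (\<phi> k) * (\<alpha> (fst k) * \<beta> (snd k)))"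
      unfolding Q_def by (simp add: algebra_simps sum_subtractf sum_distrib_left)
    also have "\<dots> = \<alpha> (fst z) * \<beta> (snd z)" unfolding b0 sum_bid_left[OF z finD] by simp
    finally show ?thesis .
  qed
  define Yt where "Yt Y t = (fst Y ! t, snd Y ! t)" for Y :: "nat list \<times> nat list" and t
  have YtD: "Yt Y t \<in> ?D" if "Y \<in> WW" "t < m" for Y t
    using that words_nth unfolding Yt_def WW_def by auto
  define Qv where "Qv \<kappa> Y = (\<Prod>t<m. Q (Yt Y t) (Yt \<kappa> t))" for \<kappa> Y
  have A: "(\<Prod>t<m. Q (Yt Y t) (Yt X t)) = (\<Sum>\<kappa>\<in>WW. Qv \<kappa> Y * cnj (Qv \<kappa> X))"
    if X: "X \<in> WW" and Y: "Y \<in> WW" for X Y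
  proof -
    have "(\<Prod>t<m. Q (Yt Y t) (Yt X t)) = (\<Prod>t<m. \<Sum>k\<in>?D. Q (Yt Y t) k * cnj (Q (Yt X t) k))"
      by (rule prod.cong[OF refl]) (simp add: Qgram YtD X Y)
    also have "\<dots> = (\<Prod>t<m. \<Sum>i<d. \<Sum>j<d. Q (Yt Y t) (i,j) * cnj (Q (Yt X t) (i,j)))"
      by (simp add: sum_pair)
    also have "\<dots> = (\<Sum>a\<in>words m {..<d}. \<Sum>b\<in>words m {..<d}. \<Prod>t<m. Q (Yt Y t) (a!t,b!t) * cnj (Q (Yt X t) (a!t,b!t)))"
      by (rule prod_sum_words)
    also have "\<dots> = (\<Sum>\<kappa>\<in>WW. Qv \<kappa> Y * cnj (Qv \<kappa> X))"
      unfolding WW_def Qv_def Yt_def by (simp add: sum_pair prod.distrib)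
    finally show ?thesis .
  qed
  have B: "btpow m (\<lambda>x y. Q x y / c) Y X = (\<Prod>t<m. Q (Yt Y t) (Yt X t)) / c ^ m" for X Y
  proof -
    obtain a b where Y: "Y = (a,b)" by (cases Y)
    obtain a' b' where X: "X = (a',b')" by (cases X)
    have "btpow m (\<lambda>x y. Q x y / c) Y X = (\<Prod>t<m. Q (Yt Y t) (Yt X t) / c)"
      unfolding btpow_def Y X Yt_def by simp
    also have "\<dots> = (\<Prod>t<m. Q (Yt Y t) (Yt X t)) / (\<Prod>t<m. c)"
      by (rule prod_dividef)
    also have "(\<Prod>t<m. c) = c ^ m" by simp
    finally show ?thesis .
  qed
  have "c ^ m * tr_prod WW M (btpow m (\<lambda>x y. Q x y / c))
      = (\<Sum>X\<in>WW. \<Sum>Y\<in>WW. M X Y * (\<Sum>\<kappa>\<in>WW. Qv \<kappa> Y * cnj (Qv \<kappa> X)))"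
  proof -
    have "c ^ m * tr_prod WW M (btpow m (\<lambda>x y. Q x y / c))
       = (\<Sum>X\<in>WW. \<Sum>Y\<in>WW. c ^ m * (M X Y * btpow m (\<lambda>x y. Q x y / c) Y X))"
      unfolding tr_prod_def by (simp add: sum_distrib_left)
    also have "\<dots> = (\<Sum>X\<in>WW. \<Sum>Y\<in>WW. M X Y * (\<Sum>\<kappa>\<in>WW. Qv \<kappa> Y * cnj (Qv \<kappa> X)))"
    proof (intro sum.cong refl)
      fix X Y assume XY: "X \<in> WW" "Y \<in> WW"
      have "c ^ m * (M X Y * btpow m (\<lambda>x y. Q x y / c) Y X) = M X Y * (\<Prod>t<m. Q (Yt Y t) (Yt X t))"
        unfolding B using c by simp
      then show "c ^ m * (M X Y * btpow m (\<lambda>x y. Q x y / c) Y X) = M X Y * (\<Sum>\<kappa>\<in>WW. Qv \<kappa> Y * cnj (Qv \<kappa> X))"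
        unfolding A[OF XY] .
    qed
    finally show ?thesis .
  qed
  then have "(\<Sum>X\<in>WW. \<Sum>Y\<in>WW. M X Y * (\<Sum>\<kappa>\<in>WW. Qv \<kappa> Y * cnj (Qv \<kappa> X))) = 0" using tr0 by simp
  moreover have "(\<Sum>X\<in>WW. \<Sum>Y\<in>WW. M X Y * (\<Sum>\<kappa>\<in>WW. Qv \<kappa> Y * cnj (Qv \<kappa> X))) = (\<Sum>\<kappa>\<in>WW. qf WW M (Qv \<kappa>))"
  proof -
    have "(\<Sum>X\<in>WW. \<Sum>Y\<in>WW. M X Y * (\<Sum>\<kappa>\<in>WW. Qv \<kappa> Y * cnj (Qv \<kappa> X)))
        = (\<Sum>X\<in>WW. \<Sum>Y\<in>WW. \<Sum>\<kappa>\<in>WW. cnj (Qv \<kappa> X) * M X Y * Qv \<kappa> Y)"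
      by (simp add: sum_distrib_left algebra_simps)
    also have "\<dots> = (\<Sum>X\<in>WW. \<Sum>\<kappa>\<in>WW. \<Sum>Y\<in>WW. cnj (Qv \<kappa> X) * M X Y * Qv \<kappa> Y)"
      by (rule sum.cong[OF refl]) (rule sum.swap)
    also have "\<dots> = (\<Sum>\<kappa>\<in>WW. \<Sum>X\<in>WW. \<Sum>Y\<in>WW. cnj (Qv \<kappa> X) * M X Y * Qv \<kappa> Y)"
      by (rule sum.swap)
    finally show ?thesis unfolding qf_def .
  qed
  ultimately have "(\<Sum>\<kappa>\<in>WW. qf WW M (Qv \<kappa>)) = 0" by simp
  then have q0: "\<forall>\<kappa>\<in>WW. qf WW M (Qv \<kappa>) = 0"
    using sum_psd_zero[OF finWW, of "\<lambda>\<kappa>. qf WW M (Qv \<kappa>)"] psd_qf[OF psdM] by blast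
  have kQ: "(\<Sum>Y\<in>WW. M X Y * Qv \<kappa> Y) = 0" if "\<kappa> \<in> WW" "X \<in> WW" for \<kappa> X
    using psd_kernel[OF finWW psdM q0[rule_format, OF that(1)] that(2)] .
  have F: "pv m f g Y = (\<Sum>\<kappa>\<in>WW. Qv \<kappa> Y * pv m f g \<kappa>)" if Y: "Y \<in> WW" for Y
  proof -
    have "pv m f g Y = (\<Prod>t<m. f t (fst (Yt Y t)) * g t (snd (Yt Y t)))"
      unfolding pv_def Yt_def by (simp add: prod.distrib)
    also have "\<dots> = (\<Prod>t<m. \<Sum>k\<in>?D. Q (Yt Y t) k * (f t (fst k) * g t (snd k)))"
      by (rule prod.cong[OF refl]) (simp add: Qfix YtD Y G)
    also have "\<dots> = (\<Prod>t<m. \<Sum>i<d. \<Sum>j<d. Q (Yt Y t) (i,j) * (f t i * g t j))"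
      by (simp add: sum_pair)
    also have "\<dots> = (\<Sum>a\<in>words m {..<d}. \<Sum>b\<in>words m {..<d}. \<Prod>t<m. Q (Yt Y t) (a!t,b!t) * (f t (a!t) * g t (b!t)))"
      by (rule prod_sum_words)
    also have "\<dots> = (\<Sum>\<kappa>\<in>WW. Qv \<kappa> Y * pv m f g \<kappa>)"
      unfolding WW_def Qv_def Yt_def pv_def by (simp add: sum_pair prod.distrib)
    finally show ?thesis .
  qed
  show ?thesis unfolding kills_def
  proof
    fix X assume X: "X \<in> WW"
    have "(\<Sum>Y\<in>WW. M X Y * pv m f g Y) = (\<Sum>Y\<in>WW. \<Sum>\<kappa>\<in>WW. pv m f g \<kappa> * (M X Y * Qv \<kappa> Y))"
    proof (intro sum.cong refl)
      fix Y assume "Y \<in> WW"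
      then show "M X Y * pv m f g Y = (\<Sum>\<kappa>\<in>WW. pv m f g \<kappa> * (M X Y * Qv \<kappa> Y))"
        by (simp only: F[OF \<open>Y \<in> WW\<close>]) (simp add: sum_distrib_left algebra_simps)
    qed
    also have "\<dots> = (\<Sum>\<kappa>\<in>WW. pv m f g \<kappa> * (\<Sum>Y\<in>WW. M X Y * Qv \<kappa> Y))"
      by (subst sum.swap) (simp add: sum_distrib_left)
    also have "\<dots> = 0" using kQ X by simp
    finally show "(\<Sum>Y\<in>WW. M X Y * pv m f g Y) = 0" .
  qed
qed

lemma ent_minor:
  assumes "entangled d \<phi>"
  shows "\<exists>p q r s. p < d \<and> q < d \<and> r < d \<and> s < d \<and> \<phi> (p,r) * \<phi> (q,s) - \<phi> (p,s) * \<phi> (q,r) \<noteq> 0"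
proof (rule ccontr)
  assume nt: "\<not> ?thesis"
  have H: "\<phi> (p,r) * \<phi> (q,s) = \<phi> (p,s) * \<phi> (q,r)" if "p < d" "q < d" "r < d" "s < d" for p q r s
  proof (rule ccontr)
    assume "\<phi> (p,r) * \<phi> (q,s) \<noteq> \<phi> (p,s) * \<phi> (q,r)"
    then have "\<phi> (p,r) * \<phi> (q,s) - \<phi> (p,s) * \<phi> (q,r) \<noteq> 0" by simp
    then show False using nt that by blast
  qed
  have notprod: "\<not> (\<forall>i<d. \<forall>j<d. \<phi> (i,j) = u i * v j)" for u v
    using assms unfolding entangled_def by blast
  show False
  proof (cases "\<exists>p0<d. \<exists>r0<d. \<phi> (p0,r0) \<noteq> 0")
    case False
    then have "\<forall>i<d. \<forall>j<d. \<phi> (i,j) = (\<lambda>_. 0::complex) i * (\<lambda>_. 0::complex) j" by simp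
    then show False using notprod[of "\<lambda>_. 0" "\<lambda>_. 0"] by blast
  next
    case True
    then obtain p0 r0 where p0: "p0 < d" and r0: "r0 < d" and nz: "\<phi> (p0,r0) \<noteq> 0" by blast
    have "\<forall>i<d. \<forall>j<d. \<phi> (i,j) = (\<lambda>i. \<phi> (i,r0)) i * (\<lambda>j. \<phi> (p0,j) / \<phi> (p0,r0)) j"
    proof (intro allI impI)
      fix i j assume ij: "i < d" "j < d"
      have e: "\<phi> (p0,r0) * \<phi> (i,j) = \<phi> (p0,j) * \<phi> (i,r0)" using H[OF p0 ij(1) r0 ij(2)] .
      have "\<phi> (i,j) = \<phi> (p0,r0) * \<phi> (i,j) / \<phi> (p0,r0)" using nz by simp
      also have "\<dots> = \<phi> (i,r0) * (\<phi> (p0,j) / \<phi> (p0,r0))" unfolding e by (simp add: mult.commute)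
      finally show "\<phi> (i,j) = (\<lambda>i. \<phi> (i,r0)) i * (\<lambda>j. \<phi> (p0,j) / \<phi> (p0,r0)) j" by simp
    qed
    then show False using notprod[of "\<lambda>i. \<phi> (i,r0)" "\<lambda>j. \<phi> (p0,j) / \<phi> (p0,r0)"] by blast
  qed
qed

theorem theorem2:
  fixes d :: nat and \<phi> :: "nat \<times> nat \<Rightarrow> complex"
  assumes "unit_vec d \<phi>"
    and "entangled d \<phi>"
  defines "\<rho> \<equiv> (\<lambda>x y. (bid x y - proj \<phi> x y) / of_nat (d\<^sup>2 - 1))"
  shows "PPT_indist_many_copy {..<d} {..<d} [proj \<phi>, \<rho>]"
  unfolding PPT_indist_many_copy_def
proof (intro allI impI notI)
  fix m :: nat
  assume "m > 0" and dist: "PPT_unamb_dist (words m {..<d}) (words m {..<d}) (map (btpow m) [proj \<phi>, \<rho>])"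
  let ?WW = "words m {..<d} \<times> words m {..<d}"
  obtain p q r s where pqrs: "p < d" "q < d" "r < d" "s < d"
    and Dnz: "\<phi> (p,r) * \<phi> (q,s) - \<phi> (p,s) * \<phi> (q,r) \<noteq> 0"
    using ent_minor[OF assms(2)] by blast
  have "p \<noteq> q" using Dnz by auto
  then have d2: "d \<ge> 2" using pqrs by linarith
  define c :: complex where "c = of_nat (d\<^sup>2 - 1)"
  have "d * d \<ge> 2 * 2" using d2 mult_le_mono by blast
  then have "d\<^sup>2 - 1 \<noteq> 0" by (simp add: power2_eq_square)
  then have c0: "c \<noteq> 0" unfolding c_def by (metis of_nat_eq_0_iff)
  obtain p0 r0 where p0: "p0 < d" and r0: "r0 < d" and nz: "\<phi> (p0,r0) \<noteq> 0"
  proof (cases "\<phi> (p,r) = 0")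
    case True
    then have "\<phi> (p,s) \<noteq> 0" using Dnz by auto
    then show ?thesis using that pqrs by blast
  next
    case False then show ?thesis using that pqrs by blast
  qed
  have rho: "\<rho> = (\<lambda>x y. (bid x y - \<phi> x * cnj (\<phi> y)) / c)"
    unfolding \<rho>_def c_def proj_def by simp
  let ?rs = "map (btpow m) [proj \<phi>, \<rho>]"
  obtain Ms :: "(nat list, nat list) bop list" and pp :: "nat \<Rightarrow> real" where
    H: "length Ms = length ?rs \<and>
        (\<forall>i<length Ms. PPT_on (words m {..<d}) (words m {..<d}) (Ms ! i)) \<and>
        (\<forall>x\<in>?WW. \<forall>y\<in>?WW. (\<Sum>k<length Ms. (Ms ! k) x y) = bid x y) \<and>
        (\<forall>i<length ?rs. pp i > 0) \<and>
        (\<forall>i<length ?rs. \<forall>j<length ?rs.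
            tr_prod ?WW (Ms ! i) (?rs ! j) = (if i = j then complex_of_real (pp i) else 0))"
    using dist unfolding PPT_unamb_dist_def by (elim exE) blast
  from H have len: "length Ms = length ?rs" by (elim conjE)
  from H have ppt: "\<forall>i<length Ms. PPT_on (words m {..<d}) (words m {..<d}) (Ms ! i)" by (elim conjE)
  from H have pos: "\<forall>i<length ?rs. pp i > 0" by (elim conjE)
  from H have tr: "\<forall>i<length ?rs. \<forall>j<length ?rs.
            tr_prod ?WW (Ms ! i) (?rs ! j) = (if i = j then complex_of_real (pp i) else 0)" by (elim conjE)
  define M where "M = Ms ! 0"
  have "PPT_on (words m {..<d}) (words m {..<d}) M" using ppt len unfolding M_def by simp
  then have psdM: "psd_on ?WW M" and psdT: "psd_on ?WW (ptB M)" unfolding PPT_on_def by auto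
  have l2: "length ?rs = 2" by simp
  have tr01: "tr_prod ?WW M (btpow m \<rho>) = 0"
    using tr[rule_format, of 0 1] unfolding M_def l2 by simp
  have tr00: "tr_prod ?WW M (btpow m (proj \<phi>)) = complex_of_real (pp 0)"
    using tr[rule_format, of 0 0] unfolding M_def l2 by simp
  have pp0: "pp 0 > 0" using pos unfolding l2 by simp
  have base: "kills ?WW M (pv m f g)" if "\<forall>u<m. inG d \<phi> (f u) (g u)" for f g
    by (rule base_kill[OF assms(1) psdM c0 tr01[unfolded rho] that])
  have K: "kills ?WW M (pv m f g)" for f g
    by (rule kill_all[OF psdM psdT base p0 r0 nz pqrs Dnz])
  have M0: "M X Y = 0" if "X \<in> ?WW" "Y \<in> ?WW" for X Y
    by (rule kills_zero[OF K that])
  have "tr_prod ?WW M (btpow m (proj \<phi>)) = 0"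
    unfolding tr_prod_def by (intro sum.neutral ballI) (simp add: M0)
  then show False using tr00 pp0 by simp
qed


end
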